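(* Let $H$ be a Hilbert space, $L:H\to[0,\infty)$ of class $C^2$, and $c:[0,\infty)\to[0,\infty)$ nonincreasing with $c(r)\le\inf\{|\nabla L(x)|/\sqrt{L(x)}:|x|\le r\}$ for all $r\ge0$ (convention $0/0=\infty$), and assume $c(r)>0$ for all $r>0$. If a solution $(x_t)_{t\ge0}$ of $\dot x(t)=-\nabla L(x(t))$ is bounded in $H$, then it converges in $H$ to a minimum of $L$, i.e. to some $x_\infty$ with $L(x_\infty)=0$. *)

theory Defs
  imports "HOL-Analysis.Analysis"
begin

text \<open>The quotient |grad L(x)| / sqrt(L(x)) as an extended real, with the convention
  that it equals infinity when L(x) = 0 (then grad L(x) = 0 as well, so this is 0/0).\<close>
definition grad_ratio :: "('a::real_inner \<Rightarrow> real) \<Rightarrow> ('a \<Rightarrow> 'a) \<Rightarrow> 'a \<Rightarrow> ereal" where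
  "grad_ratio L G x = (if L x = 0 then \<infinity> else ereal (norm (G x) / sqrt (L x)))"

end

theory Submission
  imports Defs
begin

lemma decr_aux:
  fixes r r' :: "real \<Rightarrow> real"
  assumes "a \<le> b"
    and "\<And>t. a \<le> t \<Longrightarrow> t \<le> b \<Longrightarrow> (r has_real_derivative r' t) (at t within {a..b})"
    and "\<And>t. a \<le> t \<Longrightarrow> t \<le> b \<Longrightarrow> r' t \<le> 0"
  shows "r b \<le> r a"
proof -
  have "\<exists>t\<in>{a..b}. r b - r a = (\<lambda>h. r' t * h) (b - a)"
    by (rule mvt_very_simple[OF assms(1)])
       (use assms(2) in \<open>auto simp: has_field_derivative_def\<close>)
  then obtain t where "t \<in> {a..b}" "r b - r a = r' t * (b - a)" by auto
  moreover have "r' t * (b - a) \<le> 0" using assms(1,3) \<open>t \<in> {a..b}\<close>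
    by (simp add: mult_nonpos_nonneg)
  ultimately show ?thesis by linarith
qed

theorem proposition2p3:
  fixes L :: "'a::{real_inner, complete_space} \<Rightarrow> real"
    and G :: "'a \<Rightarrow> 'a"
    and c :: "real \<Rightarrow> real"
    and x :: "real \<Rightarrow> 'a"
  assumes L_nonneg: "\<And>y. L y \<ge> 0"
    and L_grad: "\<And>y. (L has_derivative (\<lambda>h. G y \<bullet> h)) (at y)"
    and L_C2: "\<exists>D2 :: 'a \<Rightarrow> ('a \<Rightarrow>\<^sub>L 'a).
                 (\<forall>y. (G has_derivative blinfun_apply (D2 y)) (at y)) \<and> continuous_on UNIV D2"
    and c_nonneg: "\<And>r. r \<ge> 0 \<Longrightarrow> c r \<ge> 0"
    and c_mono: "\<And>r s. 0 \<le> r \<Longrightarrow> r \<le> s \<Longrightarrow> c s \<le> c r"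
    and c_bound: "\<And>r. r \<ge> 0 \<Longrightarrow> ereal (c r) \<le> (INF y\<in>{y. norm y \<le> r}. grad_ratio L G y)"
    and c_pos: "\<And>r. r > 0 \<Longrightarrow> c r > 0"
    and sol: "\<And>t. t \<ge> 0 \<Longrightarrow> (x has_vector_derivative - G (x t)) (at t within {0..})"
    and bdd: "bounded (x ` {0..})"
  shows "\<exists>x_inf. L x_inf = 0 \<and> (x \<longlongrightarrow> x_inf) at_top"
proof -
  obtain R where R: "R > 0" "\<And>t. t \<ge> 0 \<Longrightarrow> norm (x t) \<le> R"
    using bdd unfolding bounded_pos by auto
  define m where "m = c R"
  have m: "m > 0" using c_pos R(1) by (simp add: m_def)
  define f where "f = (\<lambda>t. L (x t))"
  define g where "g = (\<lambda>t. G (x t) \<bullet> G (x t))"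
  have f_nonneg: "f t \<ge> 0" for t using L_nonneg by (simp add: f_def)
  have g_nonneg: "g t \<ge> 0" for t by (simp add: g_def)
  have g_norm: "sqrt (g t) = norm (G (x t))" for t by (simp add: g_def norm_eq_sqrt_inner)
  have key: "m\<^sup>2 * f t \<le> g t" if "t \<ge> 0" for t
  proof (cases "f t = 0")
    case True then show ?thesis using g_nonneg by simp
  next
    case False
    have "ereal m \<le> grad_ratio L G (x t)"
    proof -
      have "(INF y\<in>{y. norm y \<le> R}. grad_ratio L G y) \<le> grad_ratio L G (x t)"
        by (rule INF_lower) (simp add: R(2)[OF that])
      moreover have "ereal m \<le> (INF y\<in>{y. norm y \<le> R}. grad_ratio L G y)"
        unfolding m_def using c_bound[of R] R(1) by simp
      ultimately show ?thesis by (rule order_trans[rotated])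
    qed
    then have "m \<le> norm (G (x t)) / sqrt (f t)"
      using False by (simp add: grad_ratio_def f_def)
    moreover have "sqrt (f t) > 0" using False f_nonneg by (simp add: order_less_le)
    ultimately have "m * sqrt (f t) \<le> norm (G (x t))" by (simp add: field_simps)
    then have "(m * sqrt (f t))\<^sup>2 \<le> (norm (G (x t)))\<^sup>2"
      using m \<open>sqrt (f t) > 0\<close> by (intro power_mono) auto
    then show ?thesis using f_nonneg[of t] by (simp add: power_mult_distrib power2_norm_eq_inner g_def)
  qed
  have hf: "(f has_real_derivative - g t) (at t within {0..})" if "t \<ge> 0" for t
  proof -
    have hx: "(x has_derivative (\<lambda>h. h *\<^sub>R - G (x t))) (at t within {0..})"
      using sol[OF that] by (simp add: has_vector_derivative_def)
    have "((\<lambda>t. L (x t)) has_derivative (\<lambda>h. G (x t) \<bullet> (h *\<^sub>R - G (x t)))) (at t within {0..})"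
      by (rule has_derivative_compose[OF hx L_grad])
    then have "(f has_derivative (\<lambda>h. (- g t) * h)) (at t within {0..})"
      unfolding f_def by (rule has_derivative_eq_rhs) (auto simp: g_def fun_eq_iff)
    then show ?thesis unfolding has_field_derivative_def
      by (rule has_derivative_eq_rhs) auto
  qed
  have decay: "f t * exp (m\<^sup>2 * t) \<le> f 0" if "t \<ge> 0" for t
  proof -
    have "(\<lambda>s. f s * exp (m\<^sup>2 * s)) t \<le> (\<lambda>s. f s * exp (m\<^sup>2 * s)) 0"
    proof (rule decr_aux[OF that])
      fix s assume s: "0 \<le> s" "s \<le> t"
      have "((\<lambda>s. f s * exp (m\<^sup>2 * s)) has_real_derivative
              (m\<^sup>2 * f s - g s) * exp (m\<^sup>2 * s)) (at s within {0..})"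
        by (rule derivative_eq_intros hf[OF s(1)])+ (auto simp: algebra_simps)
      then show "((\<lambda>s. f s * exp (m\<^sup>2 * s)) has_real_derivative
              (m\<^sup>2 * f s - g s) * exp (m\<^sup>2 * s)) (at s within {0..t})"
        by (rule DERIV_subset) auto
      show "(m\<^sup>2 * f s - g s) * exp (m\<^sup>2 * s) \<le> 0"
        using key[OF s(1)] by (simp add: mult_nonpos_nonneg)
    qed
    then show ?thesis by simp
  qed
  define b where "b = m\<^sup>2 / 2"
  have b: "b > 0" using m by (simp add: b_def)
  define q where "q = 1 / m\<^sup>2"
  define Phi where "Phi = (\<lambda>s. f s * exp (b * s) + q * exp (- (b * s)))"
  define K where "K = f 0 + 1 / m\<^sup>2"
  have Phi_bound: "Phi s \<le> K * exp (- (b * s))" if "s \<ge> 0" for s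
  proof -
    have "f s * exp (b * s) = (f s * exp (m\<^sup>2 * s)) * exp (- (b * s))"
      by (simp add: b_def flip: exp_add)
    also have "\<dots> \<le> f 0 * exp (- (b * s))"
      using decay[OF that] by (intro mult_right_mono) auto
    finally show ?thesis by (simp add: Phi_def K_def q_def algebra_simps)
  qed
  have Phi_nonneg: "Phi s \<ge> 0" for s
    using f_nonneg[of s] by (simp add: Phi_def q_def)
  have gen: "v \<bullet> (x t - x s) + cc * Phi t \<le> cc * Phi s"
    if "0 \<le> s" "s \<le> t" "norm v \<le> cc" for s t v cc
  proof -
    define r where "r = (\<lambda>u. v \<bullet> (x u - x s) + cc * Phi u)"
    have "r t \<le> r s"
    proof (rule decr_aux[OF that(2)])
      fix u assume u: "s \<le> u" "u \<le> t"
      then have u0: "u \<ge> 0" using that by linarith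
      have hx: "(x has_vector_derivative - G (x u)) (at u within {0..})" using sol[OF u0] .
      have "(r has_real_derivative
          v \<bullet> (- G (x u)) + cc * ((- g u) * exp (b * u) + f u * (exp (b * u) * (b * 1))
             + q * (exp (- (b * u)) * (- (b * 1))))) (at u within {0..})"
      proof -
        have hx': "(x has_derivative (\<lambda>h. h *\<^sub>R - G (x u))) (at u within {0..})"
          using hx by (simp add: has_vector_derivative_def)
        have "((\<lambda>z. v \<bullet> (x z - x s)) has_derivative (\<lambda>h. v \<bullet> (h *\<^sub>R - G (x u) - 0))) (at u within {0..})"
          by (intro derivative_intros hx')
        then have d1: "((\<lambda>z. v \<bullet> (x z - x s)) has_real_derivative v \<bullet> (- G (x u))) (at u within {0..})"
          unfolding has_field_derivative_def by (rule has_derivative_eq_rhs) (auto simp: fun_eq_iff)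
        have dPhi: "(Phi has_real_derivative ((- g u) * exp (b * u) + f u * (exp (b * u) * (b * 1))
             + q * (exp (- (b * u)) * (- (b * 1))))) (at u within {0..})"
          unfolding Phi_def
          by (rule derivative_eq_intros hf[OF u0] refl)+ auto
        show ?thesis unfolding r_def by (rule DERIV_add[OF d1 DERIV_cmult[OF dPhi]])
      qed
      then show "(r has_real_derivative
          v \<bullet> (- G (x u)) + cc * ((- g u) * exp (b * u) + f u * (exp (b * u) * (b * 1))
             + q * (exp (- (b * u)) * (- (b * 1))))) (at u within {s..t})"
        by (rule DERIV_subset) (use that in auto)
      define E where "E = exp (b * u)"
      have E: "E > 0" by (simp add: E_def)
      have Einv: "exp (- (b * u)) = 1 / E" by (simp add: E_def exp_minus field_simps)
      define n where "n = norm (G (x u))"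
      have gn: "g u = n\<^sup>2" by (simp add: n_def g_def power2_norm_eq_inner)
      have amgm: "2 * n \<le> n\<^sup>2 * E + 1 / E"
      proof -
        have "0 \<le> (n * E - 1)\<^sup>2 / E" using E by simp
        also have "\<dots> = n\<^sup>2 * E - 2 * n + 1 / E" using E by (simp add: field_simps power2_eq_square)
        finally show ?thesis by simp
      qed
      have kf: "b * f u \<le> g u / 2" using key[OF u0] by (simp add: b_def)
      have inner_le: "v \<bullet> (- G (x u)) \<le> norm v * n"
        unfolding n_def using norm_cauchy_schwarz[of v "- G (x u)"] by simp
      have "(- g u) * E + f u * (E * b) + q * (1 / E * (- b))
            = - g u * E + (b * f u) * E - 1 / (2 * E)"
        using m by (simp add: b_def q_def field_simps)
      also have "\<dots> \<le> - g u * E + (g u / 2) * E - 1 / (2 * E)"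
        using kf E by (intro diff_right_mono add_left_mono mult_right_mono) auto
      also have "\<dots> = - (n\<^sup>2 * E + 1 / E) / 2" using gn by (simp add: field_simps)
      also have "\<dots> \<le> - n" using amgm by simp
      finally have "(- g u) * E + f u * (E * b) + q * (1 / E * (- b)) \<le> - n" .
      then have C: "cc * ((- g u) * E + f u * (E * b) + q * (1 / E * (- b))) \<le> cc * (- n)"
        using norm_ge_zero[of v] that(3) by (intro mult_left_mono) (auto intro: order_trans[OF norm_ge_zero])
      have NN: "norm v * n \<le> cc * n" using that(3) by (intro mult_right_mono) (auto simp: n_def)
      show "v \<bullet> (- G (x u)) + cc * ((- g u) * exp (b * u) + f u * (exp (b * u) * (b * 1))
             + q * (exp (- (b * u)) * (- (b * 1)))) \<le> 0"
        using C NN inner_le unfolding Einv E_def mult_1_right by linarith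
    qed
    then show ?thesis by (simp add: r_def)
  qed
  have main: "norm (x t - x s) \<le> Phi s - Phi t" if "0 \<le> s" "s \<le> t" for s t
  proof -
    define v where "v = x t - x s"
    have "v \<bullet> v + norm v * Phi t \<le> norm v * Phi s"
      using gen[OF that, of v "norm v"] by (simp add: v_def)
    then have A: "norm v * norm v \<le> norm v * (Phi s - Phi t)"
      by (simp add: right_diff_distrib flip: power2_eq_square power2_norm_eq_inner)
    have "0 \<bullet> (x t - x s) + 1 * Phi t \<le> 1 * Phi s" by (rule gen[OF that]) simp
    then have "Phi t \<le> Phi s" by simp
    then show ?thesis using A
      by (cases "norm v = 0") (auto simp: v_def)
  qed
  have bnd: "norm (x t - x s) \<le> K * exp (- (b * s))" if "0 \<le> s" "s \<le> t" for s t
    using main[OF that] Phi_bound[OF that(1)] Phi_nonneg[of t] by linarith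
  have Klim: "((\<lambda>s. K * exp (- (b * s))) \<longlongrightarrow> 0) at_top"
  proof -
    have l1: "filterlim (\<lambda>s. b * s) at_top at_top"
      by (rule filterlim_tendsto_pos_mult_at_top[OF tendsto_const b filterlim_ident])
    have l2: "filterlim (\<lambda>s. - (b * s)) at_bot at_top"
      using l1 by (simp add: filterlim_uminus_at_bot)
    have "((\<lambda>s. exp (- (b * s))) \<longlongrightarrow> 0) at_top"
      by (rule filterlim_compose[OF exp_at_bot l2])
    then have "((\<lambda>s. K * exp (- (b * s))) \<longlongrightarrow> K * 0) at_top"
      by (intro tendsto_mult tendsto_const)
    then show ?thesis by simp
  qed
  have ev: "\<exists>S\<ge>0. \<forall>s\<ge>S. K * exp (- (b * s)) < e" if "e > 0" for e
  proof -
    have "eventually (\<lambda>s. K * exp (- (b * s)) < e) at_top"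
      using order_tendstoD(2)[OF Klim that] .
    then obtain S where "\<forall>s\<ge>S. K * exp (- (b * s)) < e"
      unfolding eventually_at_top_linorder by blast
    then show ?thesis by (intro exI[of _ "max S 0"]) auto
  qed
  have "Cauchy (\<lambda>n. x (real n))"
  proof (rule CauchyI)
    fix e :: real assume e: "e > 0"
    obtain S where S: "S \<ge> 0" "\<forall>s\<ge>S. K * exp (- (b * s)) < e" using ev[OF e] by blast
    define M where "M = nat \<lceil>S\<rceil>"
    have "norm (x (real m) - x (real n)) < e" if "m \<ge> M" "n \<ge> M" for m n
    proof -
      have mS: "real m \<ge> S" "real n \<ge> S" using that S(1) unfolding M_def by linarith+
      show ?thesis
      proof (cases "m \<le> n")
        case True
        have "norm (x (real n) - x (real m)) \<le> K * exp (- (b * real m))"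
          using bnd[of "real m" "real n"] True by simp
        then show ?thesis using S(2) mS by (simp add: norm_minus_commute) (meson le_less_trans)
      next
        case False
        have "norm (x (real m) - x (real n)) \<le> K * exp (- (b * real n))"
          using bnd[of "real n" "real m"] False by simp
        then show ?thesis using S(2) mS by (meson le_less_trans)
      qed
    qed
    then show "\<exists>M. \<forall>m\<ge>M. \<forall>n\<ge>M. norm (x (real m) - x (real n)) < e" by blast
  qed
  then obtain l where l: "(\<lambda>n. x (real n)) \<longlonglongrightarrow> l"
    using Cauchy_convergent_iff convergent_def by blast
  have lb: "norm (x t - l) \<le> K * exp (- (b * t))" if "t \<ge> 0" for t
  proof -
    have "(\<lambda>n. norm (x (real n) - x t)) \<longlonglongrightarrow> norm (l - x t)"
      by (intro tendsto_intros l)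
    moreover have "\<exists>N. \<forall>n\<ge>N. norm (x (real n) - x t) \<le> K * exp (- (b * t))"
    proof (intro exI allI impI)
      fix n assume "n \<ge> nat \<lceil>t\<rceil>"
      then have "real n \<ge> t" by linarith
      then show "norm (x (real n) - x t) \<le> K * exp (- (b * t))" using bnd that by blast
    qed
    ultimately have "norm (l - x t) \<le> K * exp (- (b * t))"
      by (rule LIMSEQ_le_const2)
    then show ?thesis by (simp add: norm_minus_commute)
  qed
  have "((\<lambda>t. x t - l) \<longlongrightarrow> 0) at_top"
  proof (rule Lim_null_comparison[OF _ Klim])
    show "\<forall>\<^sub>F t in at_top. norm (x t - l) \<le> K * exp (- (b * t))"
      unfolding eventually_at_top_linorder using lb by blast
  qed
  then have xlim: "(x \<longlongrightarrow> l) at_top" using LIM_zero_iff by blast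
  have "isCont L l" using has_derivative_continuous[OF L_grad] .
  then have fL: "((\<lambda>t. L (x t)) \<longlongrightarrow> L l) at_top"
    by (rule isCont_tendsto_compose[OF _ xlim])
  have fb: "L (x t) \<le> K * exp (- (b * t))" if "t \<ge> 0" for t
  proof -
    have "f t \<le> f t * exp (b * t)"
      using f_nonneg[of t] b that by (intro mult_le_cancel_left1[THEN iffD2]) auto
    also have "\<dots> \<le> Phi t" using m by (simp add: Phi_def q_def)
    also have "\<dots> \<le> K * exp (- (b * t))" using Phi_bound[OF that] .
    finally show ?thesis by (simp add: f_def)
  qed
  have "L l \<le> 0"
    by (rule tendsto_le[OF _ Klim fL]) (auto simp: eventually_at_top_linorder intro!: exI[of _ 0] fb)
  then have "L l = 0" using L_nonneg[of l] by linarith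
  then show ?thesis using xlim by blast
qed

end
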